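(* Assume $F$ satisfies (F1), (F2), (F3). An upper semicontinuous function $u:\mathbb R^n\times(0,+\infty)\to\mathbb R$ is a viscosity subsolution of $u_t+F(x,t,Xu,X^2u)=0$ if and only if for every $\phi\in C^2(\mathbb R^n\times(0,+\infty))$ and every local maximum point $(x,t)$ of $u-\phi$, $$\partial_t\phi(x,t)+F_*(x,t,X\phi(x,t),X^2\phi(x,t))\le0 .$$ Analogously, a lower semicontinuous $u$ is a viscosity supersolution if and only if for every $\phi\in C^2$ and every local minimum point $(x,t)$ of $u-\phi$, $\partial_t\phi(x,t)+F^*(x,t,X\phi(x,t),X^2\phi(x,t))\ge0$.
   Context: Step two Carnot group setting. Write $\mathbb R^n=\mathbb R^m\times\mathbb R^{n-m}$ with $2\le m<n$ and points $x=(x_h,x_v)$. Fix $n-m$ linearly independent skew-symmetric $m\times m$ real matrices $B^{(1)},\dots,B^{(n-m)}$. Let $\sigma(x)$ be the $n\times m$ matrix whose first $m$ rows form $I_m$ and whose $(m+k)$-th row is ${}^t(B^{(k)}x_h)$. The vector fields are $X_j=\sum_{i}\sigma_{ij}(x)\partial_i$, $j=1,\dots,m$. For $u\in C^2$, $Xu=\nabla u\,\sigma(x)$ (row vector) and $X^2u={}^t\sigma(x)D^2u\,\sigma(x)$. $\mathcal S^m$ is the set of real symmetric $m\times m$ matrices. Standing assumptions on $F$: $F:\mathbb R^n\times(0,+\infty)\times(\mathbb R^m\setminus\{0\})\times\mathcal S^m\to\mathbb R$ is continuous and locally bounded near points of the form $(x,t,0,A)$; $F_*(x,t,0,A)=\lim_{r\to0^+}\inf\{F(y,t,q,B):q\ne0,\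 |(y,q,B)-(x,0,A)|\le r\}$ and $F^*$ analogously with $\sup$ (for $q\ne0$, $F_*=F^*=F$). (F1) $F^*(x,t,0,\mathbb O)=F_*(x,t,0,\mathbb O)$ for all $(x,t)$. (F2) $F(x,t,p,A)\le F(x,t,p,B)$ whenever $A\ge B$. (F3) $F(x,t,\lambda p,\lambda A+\mu\,p\otimes p)=\lambda F(x,t,p,A)$ for all $\lambda>0$, $\mu\in\mathbb R$. Associated operator: $G(x,t,p,A)=F(x,t,p\sigma(x),{}^t\sigma(x)A\sigma(x))$ for $p\in\mathbb R^n$ with $p\sigma(x)\ne0$, $A\in\mathcal S^n$; $G_*,G^*$ are its lower/upper semicontinuous envelopes on all of $\mathbb R^n\times(0,\infty)\times\mathbb R^n\times\mathcal S^n$. Viscosity solutions: an upper semicontinuous $u$ is a subsolution if for every $\phi\in C^2$ and every local maximum point $(x,t)$ of $u-\phi$, $\phi_t+G_*(x,t,\nabla\phi,D^2\phi)\le0$ at $(x,t)$; a lower semicontinuous $u$ is a supersolution if for every local minimum point of $u-\phi$, $\phi_t+G^*(x,t,\nabla\phi,D^2\phi)\ge0$ there. *)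

theory Defs
  imports "HOL-Analysis.Analysis"
begin

text \<open>Step two Carnot group on R^n = R^m x R^(n-m).  Horizontal coordinates are
indexed by the finite type 'm, vertical ones by 'k (so n - m = CARD('k) \<ge> 1), and
a point of R^n is a vector indexed by the sum type 'm + 'k.\<close>

type_synonym ('m,'k) pt = "real ^ ('m + 'k)"

definition hor :: "('m::finite,'k::finite) pt \<Rightarrow> real ^ 'm" where
  "hor x = (\<chi> i. x $ Inl i)"

definition symm_mat :: "real ^ 'a ^ 'a \<Rightarrow> bool" where
  "symm_mat A \<longleftrightarrow> transpose A = A"

definition skew_mat :: "real ^ 'a ^ 'a \<Rightarrow> bool" where
  "skew_mat A \<longleftrightarrow> transpose A = - A"

definition mat_ge :: "real ^ 'a ^ 'a \<Rightarrow> real ^ 'a ^ 'a \<Rightarrow> bool" where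
  "mat_ge A B \<longleftrightarrow> (\<forall>\<xi>. \<xi> \<bullet> ((A - B) *v \<xi>) \<ge> 0)"

definition outer :: "real ^ 'a \<Rightarrow> real ^ 'a ^ 'a" where
  "outer p = (\<chi> i j. p $ i * p $ j)"

definition lin_indep_family :: "('k::finite \<Rightarrow> real ^ 'm ^ 'm) \<Rightarrow> bool" where
  "lin_indep_family B \<longleftrightarrow> (\<forall>c. (\<Sum>k\<in>UNIV. c k *\<^sub>R B k) = 0 \<longrightarrow> (\<forall>k. c k = 0))"

definition sigma :: "('k::finite \<Rightarrow> real ^ 'm ^ 'm) \<Rightarrow> ('m::finite,'k) pt \<Rightarrow> real ^ 'm ^ ('m + 'k)" where
  "sigma B x = (\<chi> r j. case r of Inl i \<Rightarrow> (if i = j then 1 else 0)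
                                | Inr k \<Rightarrow> (B k *v hor x) $ j)"

text \<open>Lower / upper envelopes of F at q = 0 (t fixed, as in the definition of F_*),
with F_* = F^* = F for q \<noteq> 0.\<close>
definition F_low :: "(('m::finite,'k::finite) pt \<Rightarrow> real \<Rightarrow> real^'m \<Rightarrow> real^'m^'m \<Rightarrow> real)
     \<Rightarrow> ('m,'k) pt \<Rightarrow> real \<Rightarrow> real^'m \<Rightarrow> real^'m^'m \<Rightarrow> real" where
  "F_low F x t q A = (if q \<noteq> 0 then F x t q A else
     Lim (at_right 0) (\<lambda>r. Inf {F y t q' B' | y q' B'. q' \<noteq> 0 \<and> symm_mat B' \<and>
                                  dist ((y, q'), B') ((x, 0), A) \<le> r}))"

definition F_up :: "(('m::finite,'k::finite) pt \<Rightarrow> real \<Rightarrow> real^'m \<Rightarrow> real^'m^'m \<Rightarrow> real)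
     \<Rightarrow> ('m,'k) pt \<Rightarrow> real \<Rightarrow> real^'m \<Rightarrow> real^'m^'m \<Rightarrow> real" where
  "F_up F x t q A = (if q \<noteq> 0 then F x t q A else
     Lim (at_right 0) (\<lambda>r. Sup {F y t q' B' | y q' B'. q' \<noteq> 0 \<and> symm_mat B' \<and>
                                  dist ((y, q'), B') ((x, 0), A) \<le> r}))"

definition G_op :: "('k::finite \<Rightarrow> real ^ 'm ^ 'm)
     \<Rightarrow> (('m::finite,'k) pt \<Rightarrow> real \<Rightarrow> real^'m \<Rightarrow> real^'m^'m \<Rightarrow> real)
     \<Rightarrow> ('m,'k) pt \<Rightarrow> real \<Rightarrow> ('m,'k) pt \<Rightarrow> real^('m+'k)^('m+'k) \<Rightarrow> real" where
  "G_op B F x t p A = F x t (p v* sigma B x) (transpose (sigma B x) ** A ** sigma B x)"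

definition G_low :: "('k::finite \<Rightarrow> real ^ 'm ^ 'm)
     \<Rightarrow> (('m::finite,'k) pt \<Rightarrow> real \<Rightarrow> real^'m \<Rightarrow> real^'m^'m \<Rightarrow> real)
     \<Rightarrow> ('m,'k) pt \<Rightarrow> real \<Rightarrow> ('m,'k) pt \<Rightarrow> real^('m+'k)^('m+'k) \<Rightarrow> real" where
  "G_low B F x t p A =
     Lim (at_right 0) (\<lambda>r. Inf {G_op B F y t p' A' | y p' A'. p' v* sigma B y \<noteq> 0 \<and> symm_mat A' \<and>
                                  dist ((y, p'), A') ((x, p), A) \<le> r})"

definition G_up :: "('k::finite \<Rightarrow> real ^ 'm ^ 'm)
     \<Rightarrow> (('m::finite,'k) pt \<Rightarrow> real \<Rightarrow> real^'m \<Rightarrow> real^'m^'m \<Rightarrow> real)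
     \<Rightarrow> ('m,'k) pt \<Rightarrow> real \<Rightarrow> ('m,'k) pt \<Rightarrow> real^('m+'k)^('m+'k) \<Rightarrow> real" where
  "G_up B F x t p A =
     Lim (at_right 0) (\<lambda>r. Sup {G_op B F y t p' A' | y p' A'. p' v* sigma B y \<noteq> 0 \<and> symm_mat A' \<and>
                                  dist ((y, p'), A') ((x, p), A) \<le> r})"

definition dom :: "(('m::finite,'k::finite) pt \<times> real) set" where
  "dom = UNIV \<times> {0<..}"

definition pd :: "('a::real_normed_vector \<Rightarrow> real) \<Rightarrow> 'a \<Rightarrow> 'a \<Rightarrow> real" where
  "pd f v z = frechet_derivative f (at z) v"

definition C2_on :: "('a::euclidean_space \<Rightarrow> real) \<Rightarrow> 'a set \<Rightarrow> bool" where
  "C2_on f U \<longleftrightarrow> (\<forall>z\<in>U. f differentiable (at z)) \<and>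
                  (\<forall>v. \<forall>z\<in>U. pd f v differentiable (at z)) \<and>
                  (\<forall>v w. continuous_on U (pd (pd f v) w))"

definition grad_x :: "(('m::finite,'k::finite) pt \<times> real \<Rightarrow> real) \<Rightarrow> ('m,'k) pt \<times> real \<Rightarrow> ('m,'k) pt" where
  "grad_x \<phi> z = (\<chi> i. pd \<phi> (axis i 1, 0) z)"

definition hess_x :: "(('m::finite,'k::finite) pt \<times> real \<Rightarrow> real) \<Rightarrow> ('m,'k) pt \<times> real
     \<Rightarrow> real^('m+'k)^('m+'k)" where
  "hess_x \<phi> z = (\<chi> i j. pd (pd \<phi> (axis i 1, 0)) (axis j 1, 0) z)"

definition d_t :: "(('m::finite,'k::finite) pt \<times> real \<Rightarrow> real) \<Rightarrow> ('m,'k) pt \<times> real \<Rightarrow> real" where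
  "d_t \<phi> z = pd \<phi> (0, 1) z"

definition usc_on :: "('a::topological_space \<Rightarrow> real) \<Rightarrow> 'a set \<Rightarrow> bool" where
  "usc_on u S \<longleftrightarrow> (\<forall>a. openin (top_of_set S) {z\<in>S. u z < a})"

definition lsc_on :: "('a::topological_space \<Rightarrow> real) \<Rightarrow> 'a set \<Rightarrow> bool" where
  "lsc_on u S \<longleftrightarrow> (\<forall>a. openin (top_of_set S) {z\<in>S. u z > a})"

definition loc_max_on :: "('a::metric_space \<Rightarrow> real) \<Rightarrow> 'a set \<Rightarrow> 'a \<Rightarrow> bool" where
  "loc_max_on f S z \<longleftrightarrow> z \<in> S \<and> (\<exists>e>0. \<forall>w\<in>S. dist w z < e \<longrightarrow> f w \<le> f z)"

definition loc_min_on :: "('a::metric_space \<Rightarrow> real) \<Rightarrow> 'a set \<Rightarrow> 'a \<Rightarrow> bool" where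
  "loc_min_on f S z \<longleftrightarrow> z \<in> S \<and> (\<exists>e>0. \<forall>w\<in>S. dist w z < e \<longrightarrow> f w \<ge> f z)"

text \<open>Viscosity sub/supersolutions of u_t + G(x,t,Du,D^2u) = 0, i.e. of u_t + F(x,t,Xu,X^2u) = 0.\<close>
definition visc_sub :: "('k::finite \<Rightarrow> real ^ 'm ^ 'm)
     \<Rightarrow> (('m::finite,'k) pt \<Rightarrow> real \<Rightarrow> real^'m \<Rightarrow> real^'m^'m \<Rightarrow> real)
     \<Rightarrow> (('m,'k) pt \<times> real \<Rightarrow> real) \<Rightarrow> bool" where
  "visc_sub B F u \<longleftrightarrow> usc_on u dom \<and>
     (\<forall>\<phi> x t. C2_on \<phi> dom \<and> loc_max_on (\<lambda>z. u z - \<phi> z) dom (x, t) \<longrightarrow>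
        d_t \<phi> (x, t) + G_low B F x t (grad_x \<phi> (x, t)) (hess_x \<phi> (x, t)) \<le> 0)"

definition visc_super :: "('k::finite \<Rightarrow> real ^ 'm ^ 'm)
     \<Rightarrow> (('m::finite,'k) pt \<Rightarrow> real \<Rightarrow> real^'m \<Rightarrow> real^'m^'m \<Rightarrow> real)
     \<Rightarrow> (('m,'k) pt \<times> real \<Rightarrow> real) \<Rightarrow> bool" where
  "visc_super B F u \<longleftrightarrow> lsc_on u dom \<and>
     (\<forall>\<phi> x t. C2_on \<phi> dom \<and> loc_min_on (\<lambda>z. u z - \<phi> z) dom (x, t) \<longrightarrow>
        d_t \<phi> (x, t) + G_up B F x t (grad_x \<phi> (x, t)) (hess_x \<phi> (x, t)) \<ge> 0)"

end

theory Submission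
  imports Defs
begin


lemma inf_mono_lim:
  fixes S :: "real \<Rightarrow> real set"
  assumes mono: "\<And>r r'. 0 < r \<Longrightarrow> r \<le> r' \<Longrightarrow> S r \<subseteq> S r'"
    and ne: "\<And>r. 0 < r \<Longrightarrow> S r \<noteq> {}"
    and R: "R > 0" and bb: "bdd_below (S R)" and ba: "bdd_above (S R)"
  shows "((\<lambda>r. Inf (S r)) \<longlongrightarrow> Sup ((\<lambda>r. Inf (S r)) ` {0<..R})) (at_right 0)"
    and "\<And>r. 0 < r \<Longrightarrow> r \<le> R \<Longrightarrow> Inf (S r) \<le> Sup ((\<lambda>r. Inf (S r)) ` {0<..R})"
proof -
  define f where "f r = Inf (S r)" for r
  obtain M where M: "\<And>v. v \<in> S R \<Longrightarrow> v \<le> M" using ba by (auto simp: bdd_above_def)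
  have fmono: "f r' \<le> f r" if "0 < r" "r \<le> r'" "r' \<le> R" for r r'
  proof -
    have "S r' \<subseteq> S R" using mono that by simp
    hence "bdd_below (S r')" by (rule bdd_below_mono[OF bb])
    moreover have "S r \<subseteq> S r'" using mono that by simp
    ultimately show ?thesis unfolding f_def by (rule cInf_superset_mono[OF ne[OF \<open>0<r\<close>]])
  qed
  have fM: "f r \<le> M" if "0 < r" "r \<le> R" for r
  proof -
    obtain v where v: "v \<in> S r" using ne[OF \<open>0<r\<close>] by blast
    have "v \<in> S R" using mono[OF \<open>0<r\<close> \<open>r\<le>R\<close>] v by blast
    moreover have "bdd_below (S r)" using mono[OF \<open>0<r\<close> \<open>r\<le>R\<close>] by (rule bdd_below_mono[OF bb])
    ultimately show ?thesis unfolding f_def using M v cInf_lower2 by blast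
  qed
  have bdd: "bdd_above (f ` {0<..R})" using fM unfolding bdd_above_def by (intro exI[of _ M]) auto
  have nei: "f ` {0<..R} \<noteq> {}" using R by auto
  show up: "\<And>r. 0 < r \<Longrightarrow> r \<le> R \<Longrightarrow> Inf (S r) \<le> Sup ((\<lambda>r. Inf (S r)) ` {0<..R})"
    using bdd unfolding f_def by (intro cSup_upper) auto
  show "((\<lambda>r. Inf (S r)) \<longlongrightarrow> Sup ((\<lambda>r. Inf (S r)) ` {0<..R})) (at_right 0)"
  proof (rule order_tendstoI)
    fix a assume "a < Sup ((\<lambda>r. Inf (S r)) ` {0<..R})"
    then obtain r1 where r1: "r1 \<in> {0<..R}" "a < f r1"
      using less_cSup_iff[OF nei bdd] unfolding f_def by auto
    show "\<forall>\<^sub>F r in at_right 0. a < Inf (S r)"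
      unfolding eventually_at_right_field
    proof (intro exI[of _ r1] conjI allI impI)
      fix r :: real assume "0 < r" "r < r1"
      then have "f r1 \<le> f r" using fmono r1 by simp
      then show "a < Inf (S r)" using r1 unfolding f_def by simp
    qed (use r1 in auto)
  next
    fix a assume a: "a > Sup ((\<lambda>r. Inf (S r)) ` {0<..R})"
    show "\<forall>\<^sub>F r in at_right 0. Inf (S r) < a"
      unfolding eventually_at_right_field
    proof (intro exI[of _ R] conjI allI impI)
      fix r :: real assume "0 < r" "r < R"
      then show "Inf (S r) < a" using up[of r] a by simp
    qed (use R in auto)
  qed
qed


lemma inf_sandwich:
  fixes S T :: "real \<Rightarrow> real set"
  assumes monoS: "\<And>r r'. 0 < r \<Longrightarrow> r \<le> r' \<Longrightarrow> S r \<subseteq> S r'"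
    and monoT: "\<And>r r'. 0 < r \<Longrightarrow> r \<le> r' \<Longrightarrow> T r \<subseteq> T r'"
    and neS: "\<And>r. 0 < r \<Longrightarrow> S r \<noteq> {}"
    and neT: "\<And>r. 0 < r \<Longrightarrow> T r \<noteq> {}"
    and R: "R > 0" and bb: "bdd_below (S R)" and ba: "bdd_above (S R)"
    and ST: "\<And>r. 0 < r \<Longrightarrow> \<exists>d>0. T d \<subseteq> S r"
    and TS: "\<And>r. 0 < r \<Longrightarrow> \<exists>d>0. S d \<subseteq> T r"
  shows "\<exists>L. ((\<lambda>r. Inf (S r)) \<longlongrightarrow> L) (at_right 0) \<and> ((\<lambda>r. Inf (T r)) \<longlongrightarrow> L) (at_right 0)"
proof -
  obtain d0 where d0: "d0 > 0" "T d0 \<subseteq> S R" using ST[OF R] by blast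
  have bbT: "bdd_below (T d0)" using d0(2) by (rule bdd_below_mono[OF bb])
  have baT: "bdd_above (T d0)" using d0(2) by (rule bdd_above_mono[OF ba])
  have LS1: "((\<lambda>r. Inf (S r)) \<longlongrightarrow> Sup ((\<lambda>r. Inf (S r)) ` {0<..R})) (at_right 0)"
    by (rule inf_mono_lim(1)[of S R]) (use monoS neS R bb ba in auto)
  have LT1: "((\<lambda>r. Inf (T r)) \<longlongrightarrow> Sup ((\<lambda>r. Inf (T r)) ` {0<..d0})) (at_right 0)"
    by (rule inf_mono_lim(1)[of T d0]) (use monoT neT d0 bbT baT in auto)
  have LS2: "Inf (S r) \<le> Sup ((\<lambda>r. Inf (S r)) ` {0<..R})" if "0 < r" "r \<le> R" for r
    by (rule inf_mono_lim(2)[of S R]) (use monoS neS R bb ba that in auto)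
  have LT2: "Inf (T r) \<le> Sup ((\<lambda>r. Inf (T r)) ` {0<..d0})" if "0 < r" "r \<le> d0" for r
    by (rule inf_mono_lim(2)[of T d0]) (use monoT neT d0 bbT baT that in auto)
  define a where "a = Sup ((\<lambda>r. Inf (S r)) ` {0<..R})"
  define b where "b = Sup ((\<lambda>r. Inf (T r)) ` {0<..d0})"
  have "a \<le> b" unfolding a_def
  proof (rule cSup_least)
    show "(\<lambda>r. Inf (S r)) ` {0<..R} \<noteq> {}" using R by auto
  next
    fix v assume "v \<in> (\<lambda>r. Inf (S r)) ` {0<..R}"
    then obtain r where r: "0 < r" "r \<le> R" "v = Inf (S r)" by auto
    obtain d where d: "d > 0" "T d \<subseteq> S r" using ST[OF r(1)] by blast
    define d' where "d' = min d d0"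
    have d': "0 < d'" "d' \<le> d0" "T d' \<subseteq> S r" using d d0 monoT[of d' d] by (auto simp: d'_def)
    have "bdd_below (S r)" using monoS[OF r(1,2)] by (rule bdd_below_mono[OF bb])
    hence "Inf (S r) \<le> Inf (T d')" using neT[OF d'(1)] d'(3) by (intro cInf_superset_mono)
    also have "\<dots> \<le> b" unfolding b_def using LT2[OF d'(1,2)] .
    finally show "v \<le> b" using r by simp
  qed
  moreover have "b \<le> a" unfolding b_def
  proof (rule cSup_least)
    show "(\<lambda>r. Inf (T r)) ` {0<..d0} \<noteq> {}" using d0 by auto
  next
    fix v assume "v \<in> (\<lambda>r. Inf (T r)) ` {0<..d0}"
    then obtain r where r: "0 < r" "r \<le> d0" "v = Inf (T r)" by auto
    obtain d where d: "d > 0" "S d \<subseteq> T r" using TS[OF r(1)] by blast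
    define d' where "d' = min d R"
    have d': "0 < d'" "d' \<le> R" "S d' \<subseteq> T r" using d R monoS[of d' d] by (auto simp: d'_def)
    have "bdd_below (T r)" using monoT[OF r(1,2)] by (rule bdd_below_mono[OF bbT])
    hence "Inf (T r) \<le> Inf (S d')" using neS[OF d'(1)] d'(3) by (intro cInf_superset_mono)
    also have "\<dots> \<le> a" unfolding a_def using LS2[OF d'(1,2)] .
    finally show "v \<le> a" using r by simp
  qed
  ultimately have "a = b" by simp
  thus ?thesis using LS1 LT1 unfolding a_def b_def by auto
qed


lemma Sup_neg_Inf: "Sup (X::real set) = - Inf (uminus ` X)"
  by (simp add: Inf_real_def image_image)

lemma sup_sandwich:
  fixes S T :: "real \<Rightarrow> real set"
  assumes monoS: "\<And>r r'. 0 < r \<Longrightarrow> r \<le> r' \<Longrightarrow> S r \<subseteq> S r'"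
    and monoT: "\<And>r r'. 0 < r \<Longrightarrow> r \<le> r' \<Longrightarrow> T r \<subseteq> T r'"
    and neS: "\<And>r. 0 < r \<Longrightarrow> S r \<noteq> {}"
    and neT: "\<And>r. 0 < r \<Longrightarrow> T r \<noteq> {}"
    and R: "R > 0" and bb: "bdd_below (S R)" and ba: "bdd_above (S R)"
    and ST: "\<And>r. 0 < r \<Longrightarrow> \<exists>d>0. T d \<subseteq> S r"
    and TS: "\<And>r. 0 < r \<Longrightarrow> \<exists>d>0. S d \<subseteq> T r"
  shows "\<exists>L. ((\<lambda>r. Sup (S r)) \<longlongrightarrow> L) (at_right 0) \<and> ((\<lambda>r. Sup (T r)) \<longlongrightarrow> L) (at_right 0)"
proof -
  have "\<exists>L. ((\<lambda>r. Inf (uminus ` S r)) \<longlongrightarrow> L) (at_right 0) \<and> ((\<lambda>r. Inf (uminus ` T r)) \<longlongrightarrow> L) (at_right 0)"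
  proof (rule inf_sandwich[OF _ _ _ _ R])
    show "bdd_below (uminus ` S R)" using ba by (simp add: bdd_below_uminus)
    show "bdd_above (uminus ` S R)" using bb by (simp add: bdd_above_uminus)
    show "uminus ` S r \<subseteq> uminus ` S r'" if "0 < r" "r \<le> r'" for r r' using monoS[OF that] by blast
    show "uminus ` T r \<subseteq> uminus ` T r'" if "0 < r" "r \<le> r'" for r r' using monoT[OF that] by blast
    show "uminus ` S r \<noteq> {}" if "0 < r" for r using neS[OF that] by blast
    show "uminus ` T r \<noteq> {}" if "0 < r" for r using neT[OF that] by blast
    show "\<exists>d>0. uminus ` T d \<subseteq> uminus ` S r" if "0 < r" for r using ST[OF that] by blast
    show "\<exists>d>0. uminus ` S d \<subseteq> uminus ` T r" if "0 < r" for r using TS[OF that] by blast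
  qed
  then obtain L where L: "((\<lambda>r. Inf (uminus ` S r)) \<longlongrightarrow> L) (at_right 0)"
      "((\<lambda>r. Inf (uminus ` T r)) \<longlongrightarrow> L) (at_right 0)" by blast
  show ?thesis
    by (rule exI[of _ "-L"]) (use tendsto_minus[OF L(1)] tendsto_minus[OF L(2)] in \<open>simp add: Sup_neg_Inf\<close>)
qed

lemma const_lim:
  fixes S :: "real \<Rightarrow> real set"
  assumes mem: "\<And>r. 0 < r \<Longrightarrow> c \<in> S r"
    and close: "\<And>e. e > 0 \<Longrightarrow> \<exists>d>0. \<forall>v\<in>S d. \<bar>v - c\<bar> \<le> e"
    and mono: "\<And>r r'. 0 < r \<Longrightarrow> r \<le> r' \<Longrightarrow> S r \<subseteq> S r'"
  shows "((\<lambda>r. Inf (S r)) \<longlongrightarrow> c) (at_right 0)" "((\<lambda>r. Sup (S r)) \<longlongrightarrow> c) (at_right 0)"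
proof -
  have ev: "\<forall>\<^sub>F r in at_right 0. \<bar>Inf (S r) - c\<bar> \<le> e \<and> \<bar>Sup (S r) - c\<bar> \<le> e" if e0: "e > 0" for e
  proof -
    obtain d where d: "d > 0" "\<forall>v\<in>S d. \<bar>v - c\<bar> \<le> e" using close[OF e0] by blast
    have *: "\<bar>Inf (S r) - c\<bar> \<le> e \<and> \<bar>Sup (S r) - c\<bar> \<le> e" if r: "0 < r" "r < d" for r
    proof -
      have sub: "\<forall>v\<in>S r. \<bar>v - c\<bar> \<le> e" using d mono[of r d] r by auto
      have bb: "bdd_below (S r)" using sub by (intro bdd_belowI[of _ "c - e"]) auto
      have ba: "bdd_above (S r)" using sub by (intro bdd_aboveI[of _ "c + e"]) auto
      have "Inf (S r) \<le> c" using mem[OF r(1)] bb by (rule cInf_lower)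
      moreover have "c - e \<le> Inf (S r)" using sub mem[OF r(1)] by (intro cInf_greatest) auto
      moreover have "c \<le> Sup (S r)" using mem[OF r(1)] ba by (rule cSup_upper)
      moreover have "Sup (S r) \<le> c + e" using sub mem[OF r(1)] by (intro cSup_least) auto
      ultimately show "\<bar>Inf (S r) - c\<bar> \<le> e \<and> \<bar>Sup (S r) - c\<bar> \<le> e" by auto
    qed
    show ?thesis unfolding eventually_at_right_field using * d(1) by blast
  qed
  show "((\<lambda>r. Inf (S r)) \<longlongrightarrow> c) (at_right 0)"
    unfolding tendsto_iff dist_real_def
  proof (intro allI impI)
    fix e :: real assume "e > 0"
    then show "\<forall>\<^sub>F r in at_right 0. \<bar>Inf (S r) - c\<bar> < e"
      using ev[of "e/2"] by (auto elim!: eventually_mono)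
  qed
  show "((\<lambda>r. Sup (S r)) \<longlongrightarrow> c) (at_right 0)"
    unfolding tendsto_iff dist_real_def
  proof (intro allI impI)
    fix e :: real assume "e > 0"
    then show "\<forall>\<^sub>F r in at_right 0. \<bar>Sup (S r) - c\<bar> < e"
      using ev[of "e/2"] by (auto elim!: eventually_mono)
  qed
qed





definition lift :: "real ^ 'm \<Rightarrow> ('m::finite,'k::finite) pt" where
  "lift w = (\<chi> r. case r of Inl i \<Rightarrow> w $ i | Inr _ \<Rightarrow> 0)"

definition blk :: "real ^ 'm ^ 'm \<Rightarrow> real ^ ('m::finite + 'k::finite) ^ ('m + 'k)" where
  "blk E = (\<chi> a b. case a of Inl i \<Rightarrow> (case b of Inl j \<Rightarrow> E $ i $ j | Inr _ \<Rightarrow> 0) | Inr _ \<Rightarrow> 0)"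

lemma sum_UNIV_Plus: "(\<Sum>r\<in>(UNIV::('a::finite + 'b::finite) set). g r) = (\<Sum>i\<in>UNIV. g (Inl i)) + (\<Sum>k\<in>UNIV. g (Inr k))"
  by (simp add: UNIV_Plus_UNIV[symmetric] sum.Plus comp_def del: UNIV_Plus_UNIV)

lemma if_mult1: "(if P then 1 else 0) * (x::real) = (if P then x else 0)" by simp
lemma if_mult2: "(x::real) * (if P then 1 else 0) = (if P then x else 0)" by simp

lemma lift_sigma: "(lift w :: ('m::finite,'k::finite) pt) v* sigma B y = w"
  by (simp add: vec_eq_iff vector_matrix_mult_def lift_def sigma_def sum_UNIV_Plus if_mult1 if_mult2)

lemma lift_0 [simp]: "lift 0 = 0"
  by (simp add: vec_eq_iff lift_def split: sum.split)

lemma blk_0 [simp]: "blk 0 = 0"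
  by (simp add: vec_eq_iff blk_def split: sum.split)

lemma sigmaT_blk: "transpose (sigma B y) ** (blk E :: real ^ ('m::finite + 'k::finite) ^ ('m + 'k))
   = (\<chi> i b. case b of Inl j \<Rightarrow> E $ i $ j | Inr _ \<Rightarrow> 0)"
  by (simp add: vec_eq_iff matrix_matrix_mult_def transpose_def blk_def sigma_def sum_UNIV_Plus
      if_mult1 if_mult2 split: sum.split)

lemma blk_sigma: "transpose (sigma B y) ** (blk E :: real ^ ('m::finite + 'k::finite) ^ ('m + 'k)) ** sigma B y = E"
  unfolding sigmaT_blk
  by (simp add: vec_eq_iff matrix_matrix_mult_def sigma_def sum_UNIV_Plus if_mult1 if_mult2)

lemma transpose_add: "transpose (A + B) = transpose A + transpose (B::real^'n^'m)"
  by (simp add: vec_eq_iff transpose_def)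

lemma transpose_diff: "transpose (A - B) = transpose A - transpose (B::real^'n^'m)"
  by (simp add: vec_eq_iff transpose_def)

lemma symm_add: "symm_mat A \<Longrightarrow> symm_mat B \<Longrightarrow> symm_mat (A + B)"
  by (simp add: symm_mat_def transpose_add)

lemma symm_diff: "symm_mat A \<Longrightarrow> symm_mat B \<Longrightarrow> symm_mat (A - B)"
  by (simp add: symm_mat_def transpose_diff)

lemma symm_blk: "symm_mat E \<Longrightarrow> symm_mat (blk E :: real ^ ('m::finite + 'k::finite) ^ ('m + 'k))"
  unfolding symm_mat_def
  by (auto simp: vec_eq_iff transpose_def blk_def split: sum.split)

lemma symm_congr: "symm_mat A \<Longrightarrow> symm_mat (transpose S ** A ** S)"
  by (simp add: symm_mat_def matrix_transpose_mul matrix_mul_assoc)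

lemma cont_vm [continuous_intros]:
  fixes f :: "'a::topological_space \<Rightarrow> real ^ 'n" and g :: "'a \<Rightarrow> real ^ 'm ^ 'n"
  shows "continuous_on S f \<Longrightarrow> continuous_on S g \<Longrightarrow> continuous_on S (\<lambda>z. f z v* g z)"
  unfolding vector_matrix_mult_def by (intro continuous_intros)

lemma cont_mm [continuous_intros]:
  fixes f :: "'a::topological_space \<Rightarrow> real ^ 'n ^ 'm" and g :: "'a \<Rightarrow> real ^ 'p ^ 'n"
  shows "continuous_on S f \<Longrightarrow> continuous_on S g \<Longrightarrow> continuous_on S (\<lambda>z. f z ** g z)"
  unfolding matrix_matrix_mult_def by (intro continuous_intros)

lemma cont_transpose [continuous_intros]:
  fixes f :: "'a::topological_space \<Rightarrow> real ^ 'n ^ 'm"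
  shows "continuous_on S f \<Longrightarrow> continuous_on S (\<lambda>z. transpose (f z))"
  unfolding transpose_def by (intro continuous_intros)

lemma cont_lift [continuous_intros]:
  fixes f :: "'a::topological_space \<Rightarrow> real ^ 'm::finite"
  shows "continuous_on S f \<Longrightarrow> continuous_on S (\<lambda>z. lift (f z) :: ('m,'k::finite) pt)"
  unfolding lift_def
proof (intro continuous_on_vec_lambda)
  fix r :: "'m + 'k" assume "continuous_on S f"
  then show "continuous_on S (\<lambda>z. case r of Inl i \<Rightarrow> f z $ i | Inr _ \<Rightarrow> 0)"
    by (cases r) (auto intro!: continuous_intros)
qed

lemma cont_blk [continuous_intros]:
  fixes f :: "'a::topological_space \<Rightarrow> real ^ 'm::finite ^ 'm"
  shows "continuous_on S f \<Longrightarrow> continuous_on S (\<lambda>z. blk (f z) :: real ^ ('m + 'k::finite) ^ ('m + 'k))"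
  unfolding blk_def
proof (intro continuous_on_vec_lambda)
  fix a b :: "'m + 'k" assume "continuous_on S f"
  then show "continuous_on S (\<lambda>z. case a of Inl i \<Rightarrow> (case b of Inl j \<Rightarrow> f z $ i $ j | Inr _ \<Rightarrow> 0) | Inr _ \<Rightarrow> 0)"
    by (cases a; cases b) (auto intro!: continuous_intros)
qed

lemma cont_sigma [continuous_intros]:
  fixes f :: "'a::topological_space \<Rightarrow> ('m::finite,'k::finite) pt"
  shows "continuous_on S f \<Longrightarrow> continuous_on S (\<lambda>z. sigma B (f z))"
  unfolding sigma_def
proof (intro continuous_on_vec_lambda)
  fix r :: "'m + 'k" and j :: 'm assume "continuous_on S f"
  then show "continuous_on S (\<lambda>z. case r of Inl i \<Rightarrow> (if i = j then 1 else 0) | Inr k \<Rightarrow> (B k *v hor (f z)) $ j)"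
    by (cases r) (auto simp: matrix_vector_mult_def hor_def intro!: continuous_intros)
qed

lemma dist3: "dist (((y, s), q'), A') (((x, s), q), Bm) = dist ((y, q'), A') ((x, q), Bm)"
  by (simp add: dist_Pair_Pair)




definition Fset where
  "Fset F x t q Bm r = {F y t q' B' | y q' B'. q' \<noteq> 0 \<and> symm_mat B' \<and> dist ((y, q'), B') ((x, q), Bm) \<le> r}"

definition Gset where
  "Gset B F x t p A r = {G_op B F y t p' A' | y p' A'. p' v* sigma B y \<noteq> 0 \<and> symm_mat A' \<and>
                                  dist ((y, p'), A') ((x, p), A) \<le> r}"

lemma Fset_mono: "r \<le> r' \<Longrightarrow> Fset F x t q Bm r \<subseteq> Fset F x t q Bm r'"
  unfolding Fset_def by fastforce

lemma Gset_mono: "r \<le> r' \<Longrightarrow> Gset B F x t p A r \<subseteq> Gset B F x t p A r'"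
  unfolding Gset_def by fastforce

lemma G_low_Gset: "G_low B F x t p A = Lim (at_right 0) (\<lambda>r. Inf (Gset B F x t p A r))"
  unfolding G_low_def Gset_def ..

lemma G_up_Gset: "G_up B F x t p A = Lim (at_right 0) (\<lambda>r. Sup (Gset B F x t p A r))"
  unfolding G_up_def Gset_def ..

lemma F_low_Fset: "F_low F x t q Bm = (if q \<noteq> 0 then F x t q Bm else Lim (at_right 0) (\<lambda>r. Inf (Fset F x t 0 Bm r)))"
  unfolding F_low_def Fset_def ..

lemma F_up_Fset: "F_up F x t q Bm = (if q \<noteq> 0 then F x t q Bm else Lim (at_right 0) (\<lambda>r. Sup (Fset F x t 0 Bm r)))"
  unfolding F_up_def Fset_def ..

lemma matrix_add_rdistrib': "(B + C) ** A = B ** A + C ** (A::real^_^_)"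
  by (vector matrix_matrix_mult_def sum.distrib[symmetric] field_simps)

lemma GF_cof:
  fixes B :: "'k::finite \<Rightarrow> real ^ 'm::finite ^ 'm" and x p :: "('m,'k) pt"
  assumes "r > 0"
  shows "\<exists>d>0. Gset B F x t p A d \<subseteq> Fset F x t (p v* sigma B x) (transpose (sigma B x) ** A ** sigma B x) r"
proof -
  define \<Phi> where "\<Phi> z = ((fst (fst z), snd (fst z) v* sigma B (fst (fst z))),
      transpose (sigma B (fst (fst z))) ** snd z ** sigma B (fst (fst z)))"
    for z :: "(('m,'k) pt \<times> ('m,'k) pt) \<times> (real ^ ('m + 'k) ^ ('m + 'k))"
  have "continuous_on UNIV \<Phi>" unfolding \<Phi>_def by (intro continuous_intros)
  then obtain d where d: "d > 0" "\<And>z'. dist z' ((x, p), A) < d \<Longrightarrow> dist (\<Phi> z') (\<Phi> ((x, p), A)) < r"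
    using assms unfolding continuous_on_iff by blast
  show ?thesis
  proof (intro exI[of _ "d/2"] conjI subsetI)
    fix v assume "v \<in> Gset B F x t p A (d/2)"
    then obtain y p' A' where v: "v = G_op B F y t p' A'" "p' v* sigma B y \<noteq> 0" "symm_mat A'"
      "dist ((y, p'), A') ((x, p), A) \<le> d/2" unfolding Gset_def by blast
    have "dist (\<Phi> ((y, p'), A')) (\<Phi> ((x, p), A)) < r" using d v(4) by simp
    then show "v \<in> Fset F x t (p v* sigma B x) (transpose (sigma B x) ** A ** sigma B x) r"
      unfolding Fset_def using v symm_congr[OF v(3)]
      by (intro CollectI exI[of _ y] exI[of _ "p' v* sigma B y"] exI[of _ "transpose (sigma B y) ** A' ** sigma B y"])
         (auto simp: G_op_def \<Phi>_def)
  qed (use d in auto)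
qed

lemma FG_cof:
  fixes B :: "'k::finite \<Rightarrow> real ^ 'm::finite ^ 'm" and x p :: "('m,'k) pt"
  assumes "r > 0" and sA: "symm_mat A"
  shows "\<exists>d>0. Fset F x t (p v* sigma B x) (transpose (sigma B x) ** A ** sigma B x) d \<subseteq> Gset B F x t p A r"
proof -
  define \<Psi> where "\<Psi> z = ((fst (fst z), p + lift (snd (fst z) - p v* sigma B (fst (fst z))) :: ('m,'k) pt),
      A + blk (snd z - transpose (sigma B (fst (fst z))) ** A ** sigma B (fst (fst z))))"
    for z :: "(('m,'k) pt \<times> (real ^ 'm)) \<times> (real ^ 'm ^ 'm)"
  have "continuous_on UNIV \<Psi>" unfolding \<Psi>_def by (intro continuous_intros)
  then obtain d where d: "d > 0" "\<And>z'. dist z' ((x, p v* sigma B x), transpose (sigma B x) ** A ** sigma B x) < d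
      \<Longrightarrow> dist (\<Psi> z') (\<Psi> ((x, p v* sigma B x), transpose (sigma B x) ** A ** sigma B x)) < r"
    using assms unfolding continuous_on_iff by blast
  have \<Psi>0: "\<Psi> ((x, p v* sigma B x), transpose (sigma B x) ** A ** sigma B x) = ((x, p), A)"
    by (simp add: \<Psi>_def)
  show ?thesis
  proof (intro exI[of _ "d/2"] conjI subsetI)
    fix v assume "v \<in> Fset F x t (p v* sigma B x) (transpose (sigma B x) ** A ** sigma B x) (d/2)"
    then obtain y q' B' where v: "v = F y t q' B'" "q' \<noteq> 0" "symm_mat B'"
      "dist ((y, q'), B') ((x, p v* sigma B x), transpose (sigma B x) ** A ** sigma B x) \<le> d/2"
      unfolding Fset_def by blast
    define p' where "p' = p + lift (q' - p v* sigma B y)"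
    define A' where "A' = A + blk (B' - transpose (sigma B y) ** A ** sigma B y)"
    have \<Psi>y: "\<Psi> ((y, q'), B') = ((y, p'), A')" by (simp add: \<Psi>_def p'_def A'_def)
    have "dist ((y, q'), B') ((x, p v* sigma B x), transpose (sigma B x) ** A ** sigma B x) < d"
      using v(4) d(1) by simp
    then have "dist (\<Psi> ((y, q'), B')) (\<Psi> ((x, p v* sigma B x), transpose (sigma B x) ** A ** sigma B x)) < r"
      by (rule d(2))
    then have dd: "dist ((y, p'), A') ((x, p), A) < r" unfolding \<Psi>0 \<Psi>y .
    have pq: "p' v* sigma B y = q'"
      by (simp add: p'_def vector_matrix_left_distrib lift_sigma)
    have BA: "transpose (sigma B y) ** A' ** sigma B y = B'"
      by (simp add: A'_def matrix_add_ldistrib matrix_add_rdistrib' blk_sigma)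
    have sA': "symm_mat A'" unfolding A'_def
      by (intro symm_add sA symm_blk symm_diff v(3) symm_congr)
    show "v \<in> Gset B F x t p A r"
      unfolding Gset_def using v pq BA sA' dd
      by (intro CollectI exI[of _ y] exI[of _ p'] exI[of _ A']) (auto simp: G_op_def)
  qed (use d in auto)
qed

lemma Fset_ne:
  fixes x :: "('m::finite,'k::finite) pt" and q :: "real ^ 'm"
  assumes "r > 0" "symm_mat Bm"
  shows "Fset F x t q Bm r \<noteq> {}"
proof (cases "q = 0")
  case True
  define q' where "q' = (r/2) *\<^sub>R (axis (undefined::'m) 1 :: real ^ 'm)"
  have "q' \<noteq> 0" using assms by (simp add: q'_def axis_eq_0_iff)
  moreover have "dist ((x, q'), Bm) ((x, q), Bm) \<le> r"
    using assms True by (simp add: dist_Pair_Pair q'_def dist_norm)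
  ultimately have "F x t q' Bm \<in> Fset F x t q Bm r" unfolding Fset_def using assms by blast
  then show ?thesis by blast
next
  case False
  then have "F x t q Bm \<in> Fset F x t q Bm r" unfolding Fset_def using assms by force
  then show ?thesis by blast
qed




lemma Fset_close:
  fixes F :: "('m::finite,'k::finite) pt \<Rightarrow> real \<Rightarrow> real^'m \<Rightarrow> real^'m^'m \<Rightarrow> real"
  assumes F_cont: "continuous_on {(((x, t), q), A). t > 0 \<and> q \<noteq> 0 \<and> symm_mat A}
                   (\<lambda>(((x, t), q), A). F x t q A)"
    and t: "t > 0" and q: "q \<noteq> 0" and sB: "symm_mat Bm" and e: "e > 0"
  shows "\<exists>d>0. \<forall>v\<in>Fset F x t q Bm d. \<bar>v - F x t q Bm\<bar> \<le> e"
proof -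
  let ?D = "{(((x, t), q), A). t > 0 \<and> q \<noteq> 0 \<and> symm_mat A} :: (((('m,'k) pt \<times> real) \<times> (real^'m)) \<times> (real^'m^'m)) set"
  have z0: "(((x, t), q), Bm) \<in> ?D" using t q sB by simp
  obtain d where d: "d > 0" "\<forall>z'\<in>?D. dist z' (((x, t), q), Bm) < d \<longrightarrow>
      dist ((\<lambda>(((x, t), q), A). F x t q A) z') ((\<lambda>(((x, t), q), A). F x t q A) (((x, t), q), Bm)) < e"
    using F_cont z0 e unfolding continuous_on_iff by blast
  show ?thesis
  proof (intro exI[of _ "d/2"] conjI ballI)
    fix v assume "v \<in> Fset F x t q Bm (d/2)"
    then obtain y q' B' where v: "v = F y t q' B'" "q' \<noteq> 0" "symm_mat B'"
      "dist ((y, q'), B') ((x, q), Bm) \<le> d/2" unfolding Fset_def by blast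
    have "(((y, t), q'), B') \<in> ?D" using v t by simp
    moreover have "dist (((y, t), q'), B') (((x, t), q), Bm) < d" unfolding dist3 using v(4) d(1) by simp
    ultimately have "dist (F y t q' B') (F x t q Bm) < e" using d(2)[rule_format, of "(((y, t), q'), B')"] by simp
    then show "\<bar>v - F x t q Bm\<bar> \<le> e" using v(1) by (simp add: dist_real_def)
  qed (use d in auto)
qed

lemma Fset_bdd:
  fixes F :: "('m::finite,'k::finite) pt \<Rightarrow> real \<Rightarrow> real^'m \<Rightarrow> real^'m^'m \<Rightarrow> real"
  assumes F_cont: "continuous_on {(((x, t), q), A). t > 0 \<and> q \<noteq> 0 \<and> symm_mat A}
                   (\<lambda>(((x, t), q), A). F x t q A)"
    and F_locbdd: "\<And>x t A. t > 0 \<Longrightarrow> symm_mat A \<Longrightarrow>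
        \<exists>r>0. \<exists>M. \<forall>y s q A'. s > 0 \<and> q \<noteq> 0 \<and> symm_mat A' \<and>
              dist (((y, s), q), A') (((x, t), 0), A) \<le> r \<longrightarrow> \<bar>F y s q A'\<bar> \<le> M"
    and t: "t > 0" and sB: "symm_mat Bm"
  shows "\<exists>R>0. bdd_below (Fset F x t q Bm R) \<and> bdd_above (Fset F x t q Bm R)"
proof (cases "q = 0")
  case True
  obtain r M where rM: "r > 0" "\<forall>y s q A'. s > 0 \<and> q \<noteq> 0 \<and> symm_mat A' \<and>
              dist (((y, s), q), A') (((x, t), 0), Bm) \<le> r \<longrightarrow> \<bar>F y s q A'\<bar> \<le> M"
    using F_locbdd[OF t sB] by blast
  have "\<bar>v\<bar> \<le> M" if vin: "v \<in> Fset F x t q Bm r" for v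
  proof -
    obtain y q' B' where v: "v = F y t q' B'" "q' \<noteq> 0" "symm_mat B'"
      "dist ((y, q'), B') ((x, q), Bm) \<le> r" using vin unfolding Fset_def by blast
    have "\<bar>F y t q' B'\<bar> \<le> M" using rM(2)[rule_format, of t q' B' y] v t True by (simp add: dist3)
    then show ?thesis using v(1) by simp
  qed
  then show ?thesis using rM(1)
    by (intro exI[of _ r] conjI bdd_belowI[of _ "-M"] bdd_aboveI[of _ M]) force+
next
  case False
  obtain d where d: "d > 0" "\<forall>v\<in>Fset F x t q Bm d. \<bar>v - F x t q Bm\<bar> \<le> 1"
    using Fset_close[OF F_cont t False sB, of 1] by auto
  then show ?thesis
    by (intro exI[of _ d] conjI bdd_belowI[of _ "F x t q Bm - 1"] bdd_aboveI[of _ "F x t q Bm + 1"]) force+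
qed

lemma Eq_low_up:
  fixes B :: "'k::finite \<Rightarrow> real ^ 'm::finite ^ 'm"
    and F :: "('m::finite,'k) pt \<Rightarrow> real \<Rightarrow> real^'m \<Rightarrow> real^'m^'m \<Rightarrow> real"
  assumes F_cont: "continuous_on {(((x, t), q), A). t > 0 \<and> q \<noteq> 0 \<and> symm_mat A}
                   (\<lambda>(((x, t), q), A). F x t q A)"
    and F_locbdd: "\<And>x t A. t > 0 \<Longrightarrow> symm_mat A \<Longrightarrow>
        \<exists>r>0. \<exists>M. \<forall>y s q A'. s > 0 \<and> q \<noteq> 0 \<and> symm_mat A' \<and>
              dist (((y, s), q), A') (((x, t), 0), A) \<le> r \<longrightarrow> \<bar>F y s q A'\<bar> \<le> M"
    and t: "t > 0" and sA: "symm_mat A"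
  shows "G_low B F x t p A = F_low F x t (p v* sigma B x) (transpose (sigma B x) ** A ** sigma B x)"
    and "G_up B F x t p A = F_up F x t (p v* sigma B x) (transpose (sigma B x) ** A ** sigma B x)"
proof -
  define q where "q = p v* sigma B x"
  define Bm where "Bm = transpose (sigma B x) ** A ** sigma B x"
  have sB: "symm_mat Bm" unfolding Bm_def by (rule symm_congr[OF sA])
  have "\<exists>R>0. bdd_below (Fset F x t q Bm R) \<and> bdd_above (Fset F x t q Bm R)"
    by (rule Fset_bdd[OF F_cont _ t sB]) (rule F_locbdd)
  then obtain R where R: "R > 0" "bdd_below (Fset F x t q Bm R)" "bdd_above (Fset F x t q Bm R)"
    by (elim exE conjE)
  have monoS: "\<And>r r'. 0 < r \<Longrightarrow> r \<le> r' \<Longrightarrow> Fset F x t q Bm r \<subseteq> Fset F x t q Bm r'"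
    by (rule Fset_mono)
  have monoT: "\<And>r r'. 0 < r \<Longrightarrow> r \<le> r' \<Longrightarrow> Gset B F x t p A r \<subseteq> Gset B F x t p A r'"
    by (rule Gset_mono)
  have neS: "\<And>r. 0 < r \<Longrightarrow> Fset F x t q Bm r \<noteq> {}" by (rule Fset_ne[OF _ sB])
  have ST: "\<And>r. 0 < r \<Longrightarrow> \<exists>d>0. Gset B F x t p A d \<subseteq> Fset F x t q Bm r"
    unfolding q_def Bm_def by (rule GF_cof)
  have TS: "\<And>r. 0 < r \<Longrightarrow> \<exists>d>0. Fset F x t q Bm d \<subseteq> Gset B F x t p A r"
    unfolding q_def Bm_def using sA by (intro FG_cof)
  have neT: "\<And>r. 0 < r \<Longrightarrow> Gset B F x t p A r \<noteq> {}"
  proof -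
    fix r :: real assume "0 < r"
    then obtain d where d: "d > 0" "Fset F x t q Bm d \<subseteq> Gset B F x t p A r" using TS[OF \<open>0 < r\<close>] by blast
    show "Gset B F x t p A r \<noteq> {}" using neS[OF d(1)] d(2) by blast
  qed
  obtain L where L: "((\<lambda>r. Inf (Fset F x t q Bm r)) \<longlongrightarrow> L) (at_right 0)"
      "((\<lambda>r. Inf (Gset B F x t p A r)) \<longlongrightarrow> L) (at_right 0)"
    proof -
    have "\<exists>L. ((\<lambda>r. Inf (Fset F x t q Bm r)) \<longlongrightarrow> L) (at_right 0) \<and> ((\<lambda>r. Inf (Gset B F x t p A r)) \<longlongrightarrow> L) (at_right 0)"
      by (rule inf_sandwich[of "Fset F x t q Bm" "Gset B F x t p A" R]) (fact monoS monoT neS neT ST TS R)+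
    then show ?thesis using that by blast
  qed
  obtain L' where L': "((\<lambda>r. Sup (Fset F x t q Bm r)) \<longlongrightarrow> L') (at_right 0)"
      "((\<lambda>r. Sup (Gset B F x t p A r)) \<longlongrightarrow> L') (at_right 0)"
    proof -
    have "\<exists>L. ((\<lambda>r. Sup (Fset F x t q Bm r)) \<longlongrightarrow> L) (at_right 0) \<and> ((\<lambda>r. Sup (Gset B F x t p A r)) \<longlongrightarrow> L) (at_right 0)"
      by (rule sup_sandwich[of "Fset F x t q Bm" "Gset B F x t p A" R]) (fact monoS monoT neS neT ST TS R)+
    then show ?thesis using that by blast
  qed
  have GL: "G_low B F x t p A = L" unfolding G_low_Gset using L(2) by (rule tendsto_Lim[rotated]) simp
  have GL': "G_up B F x t p A = L'" unfolding G_up_Gset using L'(2) by (rule tendsto_Lim[rotated]) simp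
  have "F_low F x t q Bm = L \<and> F_up F x t q Bm = L'"
  proof (cases "q = 0")
    case True
    have "Lim (at_right 0) (\<lambda>r. Inf (Fset F x t 0 Bm r)) = L"
      using L(1) True by (intro tendsto_Lim) simp_all
    moreover have "Lim (at_right 0) (\<lambda>r. Sup (Fset F x t 0 Bm r)) = L'"
      using L'(1) True by (intro tendsto_Lim) simp_all
    ultimately show ?thesis using True by (simp add: F_low_Fset F_up_Fset)
  next
    case False
    have mem: "\<And>r. 0 < r \<Longrightarrow> F x t q Bm \<in> Fset F x t q Bm r"
      unfolding Fset_def using False sB by (intro CollectI exI[of _ x] exI[of _ q] exI[of _ Bm]) simp
    have cl: "\<And>e. e > 0 \<Longrightarrow> \<exists>d>0. \<forall>v\<in>Fset F x t q Bm d. \<bar>v - F x t q Bm\<bar> \<le> e"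
      by (rule Fset_close[OF F_cont t False sB])
    have c1: "((\<lambda>r. Inf (Fset F x t q Bm r)) \<longlongrightarrow> F x t q Bm) (at_right 0)"
      by (rule const_lim(1)) (fact mem cl monoS)+
    have c2: "((\<lambda>r. Sup (Fset F x t q Bm r)) \<longlongrightarrow> F x t q Bm) (at_right 0)"
      by (rule const_lim(2)) (fact mem cl monoS)+
    have "L = F x t q Bm" using tendsto_unique[OF _ L(1) c1] by simp
    moreover have "L' = F x t q Bm" using tendsto_unique[OF _ L'(1) c2] by simp
    ultimately show ?thesis using False by (simp add: F_low_Fset F_up_Fset)
  qed
  then show "G_low B F x t p A = F_low F x t (p v* sigma B x) (transpose (sigma B x) ** A ** sigma B x)"
    and "G_up B F x t p A = F_up F x t (p v* sigma B x) (transpose (sigma B x) ** A ** sigma B x)"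
    using GL GL' unfolding q_def Bm_def by auto
qed




lemma line_deriv:
  fixes f :: "'a::real_normed_vector \<Rightarrow> real"
  assumes "f differentiable (at (a + s *\<^sub>R v))"
  shows "((\<lambda>s. f (a + s *\<^sub>R v)) has_real_derivative pd f v (a + s *\<^sub>R v)) (at s)"
proof -
  let ?D = "frechet_derivative f (at (a + s *\<^sub>R v))"
  have fd: "(f has_derivative ?D) (at (a + s *\<^sub>R v))" using assms frechet_derivative_works by blast
  have ld: "((\<lambda>s. a + s *\<^sub>R v) has_derivative (\<lambda>h. h *\<^sub>R v)) (at s)"
    by (auto intro!: derivative_eq_intros)
  have "((f \<circ> (\<lambda>s. a + s *\<^sub>R v)) has_derivative (?D \<circ> (\<lambda>h. h *\<^sub>R v))) (at s)"
    by (rule diff_chain_at[OF ld fd])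
  moreover have "?D \<circ> (\<lambda>h. h *\<^sub>R v) = (\<lambda>h. pd f v (a + s *\<^sub>R v) * h)"
    using linear.scaleR[OF has_derivative_linear[OF fd]] by (auto simp: pd_def fun_eq_iff mult.commute)
  ultimately show ?thesis unfolding has_field_derivative_def by (simp add: comp_def)
qed

lemma mixed:
  fixes f :: "'a::real_normed_vector \<Rightarrow> real"
  assumes df: "\<And>y. y \<in> ball z e \<Longrightarrow> f differentiable (at y)"
    and ddf: "\<And>y. y \<in> ball z e \<Longrightarrow> pd f v differentiable (at y)"
    and h: "0 < h" "h * (norm v + norm w) < e"
  shows "\<exists>\<xi> \<eta>. 0 < \<xi> \<and> \<xi> < h \<and> 0 < \<eta> \<and> \<eta> < h \<and>
     f (z + h *\<^sub>R w + h *\<^sub>R v) - f (z + h *\<^sub>R v) - f (z + h *\<^sub>R w) + f z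
       = h * (h * pd (pd f v) w (z + \<xi> *\<^sub>R v + \<eta> *\<^sub>R w))"
proof -
  have inb: "z + a *\<^sub>R v + b *\<^sub>R w \<in> ball z e" if "0 \<le> a" "a \<le> h" "0 \<le> b" "b \<le> h" for a b
  proof -
    have "norm (a *\<^sub>R v + b *\<^sub>R w) \<le> a * norm v + b * norm w"
      using norm_triangle_ineq[of "a *\<^sub>R v" "b *\<^sub>R w"] that by simp
    also have "\<dots> \<le> h * norm v + h * norm w"
      using that by (intro add_mono mult_right_mono) auto
    also have "\<dots> < e" using h by (simp add: distrib_left)
    finally have "norm (a *\<^sub>R v + b *\<^sub>R w) < e" .
    moreover have "z - (z + a *\<^sub>R v + b *\<^sub>R w) = - (a *\<^sub>R v + b *\<^sub>R w)" by (simp add: algebra_simps)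
    ultimately show ?thesis unfolding mem_ball dist_norm by (simp only: norm_minus_cancel)
  qed
  define g where "g s = f ((z + h *\<^sub>R w) + s *\<^sub>R v) - f (z + s *\<^sub>R v)" for s
  define g' where "g' s = pd f v ((z + h *\<^sub>R w) + s *\<^sub>R v) - pd f v (z + s *\<^sub>R v)" for s
  have "DERIV g s :> g' s" if "0 \<le> s" "s \<le> h" for s
  proof -
    have p1: "(z + h *\<^sub>R w) + s *\<^sub>R v = z + s *\<^sub>R v + h *\<^sub>R w" by (simp add: algebra_simps)
    have p2: "z + s *\<^sub>R v = z + s *\<^sub>R v + 0 *\<^sub>R w" by simp
    have "f differentiable (at ((z + h *\<^sub>R w) + s *\<^sub>R v))"
      unfolding p1 using that h by (intro df inb) auto
    moreover have "f differentiable (at (z + s *\<^sub>R v))"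
      using inb[of s 0] that h by (intro df) auto
    ultimately show ?thesis unfolding g_def g'_def
      by (intro derivative_intros line_deriv)
  qed
  then obtain \<xi> where xi: "0 < \<xi>" "\<xi> < h" "g h - g 0 = (h - 0) * g' \<xi>"
    using MVT2[OF h(1), of g g'] by auto
  define k where "k s = pd f v ((z + \<xi> *\<^sub>R v) + s *\<^sub>R w)" for s
  define k' where "k' s = pd (pd f v) w ((z + \<xi> *\<^sub>R v) + s *\<^sub>R w)" for s
  have "DERIV k s :> k' s" if "0 \<le> s" "s \<le> h" for s
    unfolding k_def k'_def
    by (rule line_deriv, rule ddf, rule inb) (use that xi in auto)
  then obtain \<eta> where eta: "0 < \<eta>" "\<eta> < h" "k h - k 0 = (h - 0) * k' \<eta>"
    using MVT2[OF h(1), of k k'] by auto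
  have "g' \<xi> = k h - k 0"
    unfolding g'_def k_def by (simp add: algebra_simps)
  then have "g h - g 0 = h * (h * k' \<eta>)" using xi eta by simp
  moreover have "g h - g 0 = f (z + h *\<^sub>R w + h *\<^sub>R v) - f (z + h *\<^sub>R v) - f (z + h *\<^sub>R w) + f z"
    unfolding g_def by simp
  ultimately show ?thesis using xi eta unfolding k'_def by (intro exI[of _ \<xi>] exI[of _ \<eta>]) auto
qed

lemma inb_lemma:
  fixes v w z :: "'a::real_normed_vector"
  assumes "0 \<le> a" "a \<le> h" "0 \<le> b" "b \<le> h" "h * (norm v + norm w) < e"
  shows "z + a *\<^sub>R v + b *\<^sub>R w \<in> ball z e"
proof -
  have "norm (a *\<^sub>R v + b *\<^sub>R w) \<le> a * norm v + b * norm w"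
    using norm_triangle_ineq[of "a *\<^sub>R v" "b *\<^sub>R w"] assms by simp
  also have "\<dots> \<le> h * norm v + h * norm w"
    using assms by (intro add_mono mult_right_mono) auto
  also have "\<dots> < e" using assms by (simp add: distrib_left)
  finally have "norm (a *\<^sub>R v + b *\<^sub>R w) < e" .
  moreover have "z - (z + a *\<^sub>R v + b *\<^sub>R w) = - (a *\<^sub>R v + b *\<^sub>R w)" by (simp add: algebra_simps)
  ultimately show ?thesis unfolding mem_ball dist_norm by (simp only: norm_minus_cancel)
qed

lemma schwarz:
  fixes f :: "'a::real_normed_vector \<Rightarrow> real"
  assumes U: "open U" "z \<in> U" and df: "\<forall>y\<in>U. f differentiable (at y)"
    and ddf: "\<forall>v. \<forall>y\<in>U. pd f v differentiable (at y)"
    and cont: "\<forall>v w. continuous_on U (pd (pd f v) w)"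
  shows "pd (pd f v) w z = pd (pd f w) v z"
proof (rule ccontr)
  define a where "a = pd (pd f v) w z"
  define b where "b = pd (pd f w) v z"
  assume "pd (pd f v) w z \<noteq> pd (pd f w) v z"
  then have ab: "a \<noteq> b" unfolding a_def b_def .
  define \<epsilon> where "\<epsilon> = \<bar>a - b\<bar> / 2"
  have eps: "\<epsilon> > 0" using ab by (simp add: \<epsilon>_def)
  obtain e where e: "e > 0" "ball z e \<subseteq> U" using U openE by blast
  obtain d1 where d1: "d1 > 0" "\<forall>y\<in>U. dist y z < d1 \<longrightarrow> dist (pd (pd f v) w y) a < \<epsilon>"
    using cont U(2) eps unfolding continuous_on_iff a_def by blast
  obtain d2 where d2: "d2 > 0" "\<forall>y\<in>U. dist y z < d2 \<longrightarrow> dist (pd (pd f w) v y) b < \<epsilon>"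
    using cont U(2) eps unfolding continuous_on_iff b_def by blast
  define r where "r = min e (min d1 d2)"
  have r: "r > 0" "r \<le> e" "r \<le> d1" "r \<le> d2" using e d1 d2 by (auto simp: r_def)
  define h where "h = r / (2 * (norm v + norm w + 1))"
  have den: "2 * (norm v + norm w + 1) > 0" by (smt (verit) norm_ge_zero)
  have hpos: "h > 0" unfolding h_def by (intro divide_pos_pos r(1) den)
  have hr: "h * (norm v + norm w) < r"
  proof -
    have "h * (norm v + norm w) \<le> h * (norm v + norm w + 1)" using hpos by simp
    also have "\<dots> = r / 2" unfolding h_def using den by (simp add: field_simps)
    finally show ?thesis using r by simp
  qed
  have hr': "h * (norm w + norm v) < r" using hr by (simp add: add.commute)
  have bU: "ball z r \<subseteq> U" using e r by auto
  obtain \<xi> \<eta> where 1: "0 < \<xi>" "\<xi> < h" "0 < \<eta>" "\<eta> < h"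
     "f (z + h *\<^sub>R w + h *\<^sub>R v) - f (z + h *\<^sub>R v) - f (z + h *\<^sub>R w) + f z
       = h * (h * pd (pd f v) w (z + \<xi> *\<^sub>R v + \<eta> *\<^sub>R w))"
    using mixed[of z r f v h w] df ddf bU hpos hr by blast
  obtain \<xi>' \<eta>' where 2: "0 < \<xi>'" "\<xi>' < h" "0 < \<eta>'" "\<eta>' < h"
     "f (z + h *\<^sub>R v + h *\<^sub>R w) - f (z + h *\<^sub>R w) - f (z + h *\<^sub>R v) + f z
       = h * (h * pd (pd f w) v (z + \<xi>' *\<^sub>R w + \<eta>' *\<^sub>R v))"
    using mixed[of z r f w h v] df ddf bU hpos hr' by blast
  have "f (z + h *\<^sub>R v + h *\<^sub>R w) = f (z + h *\<^sub>R w + h *\<^sub>R v)" by (simp add: algebra_simps)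
  then have "h * (h * pd (pd f v) w (z + \<xi> *\<^sub>R v + \<eta> *\<^sub>R w)) =
             h * (h * pd (pd f w) v (z + \<xi>' *\<^sub>R w + \<eta>' *\<^sub>R v))" using 1(5) 2(5) by linarith
  then have eq: "pd (pd f v) w (z + \<xi> *\<^sub>R v + \<eta> *\<^sub>R w) = pd (pd f w) v (z + \<xi>' *\<^sub>R w + \<eta>' *\<^sub>R v)"
    using hpos by simp
  have p1: "z + \<xi> *\<^sub>R v + \<eta> *\<^sub>R w \<in> ball z r" using 1 hr by (intro inb_lemma) auto
  have p2: "z + \<xi>' *\<^sub>R w + \<eta>' *\<^sub>R v \<in> ball z r" using 2 hr' by (intro inb_lemma) auto
  have c1: "dist (pd (pd f v) w (z + \<xi> *\<^sub>R v + \<eta> *\<^sub>R w)) a < \<epsilon>"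
    using d1(2) p1 bU r by (auto simp: dist_commute)
  have c2: "dist (pd (pd f w) v (z + \<xi>' *\<^sub>R w + \<eta>' *\<^sub>R v)) b < \<epsilon>"
    using d2(2) p2 bU r by (auto simp: dist_commute)
  have "\<bar>a - b\<bar> < 2 * \<epsilon>" using c1 c2 eq unfolding dist_real_def by linarith
  then show False unfolding \<epsilon>_def by simp
qed

lemma open_dom: "open (dom :: (('m::finite,'k::finite) pt \<times> real) set)"
  unfolding dom_def by (intro open_Times) auto

lemma hess_symm:
  fixes \<phi> :: "('m::finite,'k::finite) pt \<times> real \<Rightarrow> real"
  assumes "C2_on \<phi> dom" "z \<in> dom"
  shows "symm_mat (hess_x \<phi> z)"
proof -
  have "pd (pd \<phi> u) u' z = pd (pd \<phi> u') u z" for u u'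
    using assms open_dom unfolding C2_on_def by (intro schwarz) auto
  then show ?thesis unfolding symm_mat_def hess_x_def transpose_def by (simp add: vec_eq_iff)
qed


theorem corollary3p4:
  fixes B :: "'k::finite \<Rightarrow> real ^ 'm ^ 'm"
    and F :: "('m::finite,'k) pt \<Rightarrow> real \<Rightarrow> real^'m \<Rightarrow> real^'m^'m \<Rightarrow> real"
    and u :: "('m,'k) pt \<times> real \<Rightarrow> real"
  assumes m2: "CARD('m) \<ge> 2"
    and skew: "\<And>k. skew_mat (B k)"
    and indep: "lin_indep_family B"
    and F_cont: "continuous_on {(((x, t), q), A). t > 0 \<and> q \<noteq> 0 \<and> symm_mat A}
                   (\<lambda>(((x, t), q), A). F x t q A)"
    and F_locbdd: "\<And>x t A. t > 0 \<Longrightarrow> symm_mat A \<Longrightarrow>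
        \<exists>r>0. \<exists>M. \<forall>y s q A'. s > 0 \<and> q \<noteq> 0 \<and> symm_mat A' \<and>
              dist (((y, s), q), A') (((x, t), 0), A) \<le> r \<longrightarrow> \<bar>F y s q A'\<bar> \<le> M"
    and F1: "\<And>x t. t > 0 \<Longrightarrow> F_up F x t 0 0 = F_low F x t 0 0"
    and F2: "\<And>x t p A A'. t > 0 \<Longrightarrow> p \<noteq> 0 \<Longrightarrow> symm_mat A \<Longrightarrow> symm_mat A' \<Longrightarrow>
               mat_ge A A' \<Longrightarrow> F x t p A \<le> F x t p A'"
    and F3: "\<And>x t p A (c::real) \<mu>. t > 0 \<Longrightarrow> p \<noteq> 0 \<Longrightarrow> symm_mat A \<Longrightarrow> c > 0 \<Longrightarrow>
               F x t (c *\<^sub>R p) (c *\<^sub>R A + \<mu> *\<^sub>R outer p) = c * F x t p A"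
  shows "(usc_on u dom \<longrightarrow>
           (visc_sub B F u \<longleftrightarrow>
             (\<forall>\<phi> x t. C2_on \<phi> dom \<and> loc_max_on (\<lambda>z. u z - \<phi> z) dom (x, t) \<longrightarrow>
                d_t \<phi> (x, t) + F_low F x t (grad_x \<phi> (x, t) v* sigma B x)
                   (transpose (sigma B x) ** hess_x \<phi> (x, t) ** sigma B x) \<le> 0)))
       \<and> (lsc_on u dom \<longrightarrow>
           (visc_super B F u \<longleftrightarrow>
             (\<forall>\<phi> x t. C2_on \<phi> dom \<and> loc_min_on (\<lambda>z. u z - \<phi> z) dom (x, t) \<longrightarrow>
                d_t \<phi> (x, t) + F_up F x t (grad_x \<phi> (x, t) v* sigma B x)
                   (transpose (sigma B x) ** hess_x \<phi> (x, t) ** sigma B x) \<ge> 0)))"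
proof -
  have eq: "G_low B F x t (grad_x \<phi> (x, t)) (hess_x \<phi> (x, t)) =
              F_low F x t (grad_x \<phi> (x, t) v* sigma B x) (transpose (sigma B x) ** hess_x \<phi> (x, t) ** sigma B x)
         \<and> G_up B F x t (grad_x \<phi> (x, t)) (hess_x \<phi> (x, t)) =
              F_up F x t (grad_x \<phi> (x, t) v* sigma B x) (transpose (sigma B x) ** hess_x \<phi> (x, t) ** sigma B x)"
    if C2: "C2_on \<phi> dom" and xt: "(x, t) \<in> dom" for \<phi> x t
  proof -
    have t: "t > 0" using xt by (simp add: dom_def)
    have sA: "symm_mat (hess_x \<phi> (x, t))" by (rule hess_symm[OF C2 xt])
    have "G_low B F x t (grad_x \<phi> (x, t)) (hess_x \<phi> (x, t)) =
              F_low F x t (grad_x \<phi> (x, t) v* sigma B x) (transpose (sigma B x) ** hess_x \<phi> (x, t) ** sigma B x)"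
      by (rule Eq_low_up(1)[OF F_cont _ t sA]) (rule F_locbdd)
    moreover have "G_up B F x t (grad_x \<phi> (x, t)) (hess_x \<phi> (x, t)) =
              F_up F x t (grad_x \<phi> (x, t) v* sigma B x) (transpose (sigma B x) ** hess_x \<phi> (x, t) ** sigma B x)"
      by (rule Eq_low_up(2)[OF F_cont _ t sA]) (rule F_locbdd)
    ultimately show ?thesis ..
  qed
  show ?thesis
  proof (intro conjI impI)
    assume "usc_on u dom"
    show "visc_sub B F u \<longleftrightarrow>
             (\<forall>\<phi> x t. C2_on \<phi> dom \<and> loc_max_on (\<lambda>z. u z - \<phi> z) dom (x, t) \<longrightarrow>
                d_t \<phi> (x, t) + F_low F x t (grad_x \<phi> (x, t) v* sigma B x)
                   (transpose (sigma B x) ** hess_x \<phi> (x, t) ** sigma B x) \<le> 0)"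
      unfolding visc_sub_def using \<open>usc_on u dom\<close> eq by (auto simp: loc_max_on_def)
  next
    assume "lsc_on u dom"
    show "visc_super B F u \<longleftrightarrow>
             (\<forall>\<phi> x t. C2_on \<phi> dom \<and> loc_min_on (\<lambda>z. u z - \<phi> z) dom (x, t) \<longrightarrow>
                d_t \<phi> (x, t) + F_up F x t (grad_x \<phi> (x, t) v* sigma B x)
                   (transpose (sigma B x) ** hess_x \<phi> (x, t) ** sigma B x) \<ge> 0)"
      unfolding visc_super_def using \<open>lsc_on u dom\<close> eq by (auto simp: loc_min_on_def)
  qed
qed

end
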